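(* For every formula $\phi$, $\mathbf{GLP}\vdash[1]\phi$ if and only if $\mathbf{GLP}\vdash\phi\leftrightarrow(Q_k(\phi)\to\phi)$ for some $k\geq 1$.
   Context: $\mathbf{GLP}$ is the propositional polymodal logic with modalities $[0],[1],\dots$ ($\langle k\rangle:=\neg[k]\neg$) axiomatized by classical tautologies; $[k](\phi\to\psi)\to([k]\phi\to[k]\psi)$; $[k]([k]\phi\to\phi)\to[k]\phi$; $\langle j\rangle\phi\to[k]\langle j\rangle\phi$ for $j<k$; $[j]\phi\to[k]\phi$ for $j\leq k$; rules modus ponens and necessitation. Define $Q_1(\phi):=\phi$ and $Q_{i+1}(\phi):=\phi\lor[0]Q_i(\phi)$. *)

theory Defs
  imports Main
begin

datatype fm =
    Var nat
  | Bot
  | Neg fm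
  | Conj fm fm
  | Disj fm fm
  | Imp fm fm
  | Box nat fm

definition Iff :: "fm \<Rightarrow> fm \<Rightarrow> fm" where
  "Iff a b = Conj (Imp a b) (Imp b a)"

definition Dia :: "nat \<Rightarrow> fm \<Rightarrow> fm" where
  "Dia k a = Neg (Box k (Neg a))"

fun peval :: "(fm \<Rightarrow> bool) \<Rightarrow> fm \<Rightarrow> bool" where
  "peval v (Var p) = v (Var p)"
| "peval v Bot = False"
| "peval v (Neg a) = (\<not> peval v a)"
| "peval v (Conj a b) = (peval v a \<and> peval v b)"
| "peval v (Disj a b) = (peval v a \<or> peval v b)"
| "peval v (Imp a b) = (peval v a \<longrightarrow> peval v b)"
| "peval v (Box k a) = v (Box k a)"

definition taut :: "fm \<Rightarrow> bool" where
  "taut a = (\<forall>v. peval v a)"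

inductive GLP :: "fm \<Rightarrow> bool" where
  ax_taut: "taut a \<Longrightarrow> GLP a"
| ax_K: "GLP (Imp (Box k (Imp a b)) (Imp (Box k a) (Box k b)))"
| ax_L: "GLP (Imp (Box k (Imp (Box k a) a)) (Box k a))"
| ax_neg: "j < k \<Longrightarrow> GLP (Imp (Dia j a) (Box k (Dia j a)))"
| ax_mono: "j \<le> k \<Longrightarrow> GLP (Imp (Box j a) (Box k a))"
| mp: "GLP (Imp a b) \<Longrightarrow> GLP a \<Longrightarrow> GLP b"
| nec: "GLP a \<Longrightarrow> GLP (Box k a)"

text \<open>Q_1(phi) = phi, Q_{i+1}(phi) = phi or [0] Q_i(phi). Q 0 is an irrelevant default.\<close>
fun Q :: "nat \<Rightarrow> fm \<Rightarrow> fm" where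
  "Q 0 a = a"
| "Q (Suc 0) a = a"
| "Q (Suc (Suc i)) a = Disj a (Box 0 (Q (Suc i) a))"

end

theory Submission
  imports Defs
begin

lemma GLP_mp1: "GLP a \<Longrightarrow> (\<And>v. peval v a \<Longrightarrow> peval v b) \<Longrightarrow> GLP b"
  by (rule GLP.mp[of a b]) (auto intro!: ax_taut simp: taut_def)

lemma GLP_mp2: "GLP a \<Longrightarrow> GLP b \<Longrightarrow> (\<And>v. peval v a \<Longrightarrow> peval v b \<Longrightarrow> peval v c) \<Longrightarrow> GLP c"
  by (rule GLP.mp[of b c], rule GLP_mp1[of a]) auto

lemma GLP_mp3: "GLP a \<Longrightarrow> GLP b \<Longrightarrow> GLP c \<Longrightarrow> (\<And>v. peval v a \<Longrightarrow> peval v b \<Longrightarrow> peval v c \<Longrightarrow> peval v d) \<Longrightarrow> GLP d"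
  by (rule GLP.mp[of c d], rule GLP_mp2[of a b]) auto

lemma GLP_t: "(\<And>v. peval v b) \<Longrightarrow> GLP b"
  by (auto intro!: ax_taut simp: taut_def)

lemma box_mono: "GLP (Imp a b) \<Longrightarrow> GLP (Imp (Box k a) (Box k b))"
  by (rule GLP.mp[OF ax_K nec])

lemma box_conj: "GLP (Imp (Conj (Box k a) (Box k b)) (Box k (Conj a b)))"
proof -
  have 1: "GLP (Imp (Box k a) (Box k (Imp b (Conj a b))))" by (rule box_mono, rule GLP_t) auto
  show ?thesis by (rule GLP_mp2[OF 1 ax_K[of k b "Conj a b"]]) auto
qed

lemma four: "GLP (Imp (Box k a) (Box k (Conj (Box k a) a)))"
proof -
  define c where "c = Conj (Box k a) a"
  have s1: "GLP (Imp (Box k c) (Box k a))" by (rule box_mono, rule GLP_t) (auto simp: c_def)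
  have s2: "GLP (Imp a (Imp (Box k c) c))" by (rule GLP_mp1[OF s1]) (auto simp: c_def)
  have s3: "GLP (Imp (Box k a) (Box k (Imp (Box k c) c)))" by (rule box_mono[OF s2])
  show ?thesis using GLP_mp2[OF s3 ax_L[of k c]] unfolding c_def by auto
qed

fun Qp :: "nat \<Rightarrow> fm \<Rightarrow> fm" where
  "Qp 0 a = a"
| "Qp (Suc n) a = Disj a (Box 0 (Qp n a))"

lemma Q_Qp: "Q (Suc n) a = Qp n a"
  by (induction n) auto

lemma peval_Qp: "peval v a \<Longrightarrow> peval v (Qp n a)"
  by (cases n) auto

lemma box1_Qp: "GLP (Imp (Box 1 (Qp n a)) (Box 1 a))"
proof (induction n)
  case 0
  then show ?case by (auto intro: GLP_t)
next
  case (Suc n)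
  define X where "X = Qp n a"
  have IH: "GLP (Imp (Box 1 X) (Box 1 a))" using Suc X_def by simp
  have m: "GLP (Imp (Box 0 X) (Box 1 X))" by (rule ax_mono) simp
  have n1: "GLP (Imp (Dia 0 (Neg X)) (Box 1 (Dia 0 (Neg X))))" by (rule ax_neg) simp
  have n2: "GLP (Imp (Box 0 X) (Box 0 (Neg (Neg X))))" by (rule box_mono, rule GLP_t) auto
  have n3: "GLP (Imp (Box 1 (Dia 0 (Neg X))) (Box 1 (Neg (Box 0 X))))"
    by (rule box_mono, rule GLP_mp1[OF n2]) (auto simp: Dia_def)
  have k1: "GLP (Imp (Box 1 (Disj a (Box 0 X))) (Box 1 (Imp (Neg (Box 0 X)) a)))"
    by (rule box_mono, rule GLP_t) auto
  have k2: "GLP (Imp (Box 1 (Imp (Neg (Box 0 X)) a)) (Imp (Box 1 (Neg (Box 0 X))) (Box 1 a)))"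
    by (rule ax_K)
  have n4: "GLP (Imp (Box 0 (Neg (Neg X))) (Box 0 X))" by (rule box_mono, rule GLP_t) auto
  have A: "GLP (Imp (Neg (Box 0 X)) (Box 1 (Neg (Box 0 X))))"
    by (rule GLP_mp3[OF n1 n3 n4]) (auto simp: Dia_def)
  have B: "GLP (Imp (Box 0 X) (Box 1 a))" by (rule GLP_mp2[OF m IH]) auto
  have k3: "GLP (Imp (Box 1 (Disj a (Box 0 X))) (Imp (Box 1 (Neg (Box 0 X))) (Box 1 a)))"
    by (rule GLP_mp2[OF k1 k2]) auto
  have "GLP (Imp (Box 1 (Disj a (Box 0 X))) (Box 1 a))"
    by (rule GLP_mp3[OF k3 A B]) auto
  then show ?case by (simp add: X_def)
qed

lemma Qp_suc: "GLP (Imp (Qp n a) (Qp (Suc n) a))"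
proof (induction n)
  case 0 then show ?case by (auto intro: GLP_t)
next
  case (Suc n)
  have "GLP (Imp (Box 0 (Qp n a)) (Box 0 (Qp (Suc n) a)))" by (rule box_mono[OF Suc])
  then show ?case by (rule GLP_mp1) auto
qed

lemma Qp_add: "GLP (Imp (Qp n a) (Qp (n + m) a))"
proof (induction m)
  case 0 then show ?case by (auto intro: GLP_t)
next
  case (Suc m)
  show ?case by (rule GLP_mp2[OF Suc Qp_suc[of "n+m" a]]) auto
qed

lemma persist_Qp:
  assumes H: "GLP (Imp H (Box 0 H))"
  shows "GLP (Imp (Conj H (Qp b (Imp H a))) (Qp b a))"
proof (induction b)
  case 0 then show ?case by (auto intro: GLP_t)
next
  case (Suc b)
  have 1: "GLP (Imp (Box 0 (Conj H (Qp b (Imp H a)))) (Box 0 (Qp b a)))" by (rule box_mono[OF Suc])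
  show ?case by (rule GLP_mp3[OF 1 box_conj[of 0 H "Qp b (Imp H a)"] H]) auto
qed

lemma M3:
  assumes G: "GLP (Imp G (Box 0 (Qp b a)))"
  shows "GLP (Imp (Qp n (Disj G a)) (Qp (n + b + 1) a))"
proof (induction n)
  case 0
  then show ?case by (simp, rule GLP_mp1[OF G]) auto
next
  case (Suc n)
  have 1: "GLP (Imp (Box 0 (Qp n (Disj G a))) (Box 0 (Qp (n + b + 1) a)))" by (rule box_mono[OF Suc])
  have 2: "GLP (Imp (Box 0 (Qp b a)) (Box 0 (Qp (n + b + 1) a)))"
    by (rule box_mono) (use Qp_add[of b a "n+1"] in \<open>simp add: ac_simps\<close>)
  show ?case by (simp, rule GLP_mp3[OF 1 2 G]) auto
qed

fun conj :: "fm list \<Rightarrow> fm" where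
  "conj [] = Imp Bot Bot"
| "conj (x # xs) = Conj x (conj xs)"

lemma peval_conj[simp]: "peval v (conj L) = (\<forall>x\<in>set L. peval v x)"
  by (induction L) auto

definition R :: "fm list \<Rightarrow> fm" where
  "R cs = conj (map (\<lambda>c. Imp (Box 0 c) c) cs)"

lemma peval_R: "peval v (R cs) = (\<forall>c\<in>set cs. v (Box 0 c) \<longrightarrow> peval v c)"
  by (auto simp: R_def)

lemma RQ: "GLP (Imp (R cs) a) \<Longrightarrow> \<exists>n. GLP (Qp n a)"
proof (induction cs arbitrary: a)
  case Nil
  then have "GLP a" by (rule GLP_mp1) (auto simp: R_def)
  then have "GLP (Qp 0 a)" by simp
  then show ?case by blast
next
  case (Cons c cs)
  define H where "H = Conj (Box 0 c) c"
  have h: "GLP (Imp (Conj (Imp (Box 0 c) c) (R cs)) a)" using Cons.prems by (simp add: R_def)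
  have A: "GLP (Imp (R cs) (Disj (Box 0 c) a))" by (rule GLP_mp1[OF h]) auto
  have B: "GLP (Imp (R cs) (Imp H a))" by (rule GLP_mp1[OF h]) (auto simp: H_def)
  obtain na where na: "GLP (Qp na (Disj (Box 0 c) a))" using Cons.IH[OF A] by blast
  obtain nb where nb: "GLP (Qp nb (Imp H a))" using Cons.IH[OF B] by blast
  have f: "GLP (Imp (Box 0 c) (Box 0 H))" using four[of 0 c] by (simp add: H_def)
  have Hp: "GLP (Imp H (Box 0 H))" by (rule GLP_mp1[OF f]) (auto simp: H_def)
  have P: "GLP (Imp H (Qp nb a))" by (rule GLP_mp2[OF persist_Qp[OF Hp] nb]) auto
  have G: "GLP (Imp (Box 0 c) (Box 0 (Qp nb a)))"
    by (rule GLP_mp2[OF f box_mono[OF P]]) auto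
  have "GLP (Qp (na + nb + 1) a)" by (rule GLP.mp[OF M3[OF G] na])
  then show ?case by blast
qed

inductive D :: "fm \<Rightarrow> bool" where
  D_glp: "GLP a \<Longrightarrow> D a"
| D_rfn: "D (Imp (Box 0 c) c)"
| D_mp: "D (Imp a b) \<Longrightarrow> D a \<Longrightarrow> D b"

lemma D_mp1: "D a \<Longrightarrow> (\<And>v. peval v a \<Longrightarrow> peval v b) \<Longrightarrow> D b"
  by (rule D_mp[of a b], rule D_glp, rule GLP_t) auto

lemma D_mp2: "D a \<Longrightarrow> D b \<Longrightarrow> (\<And>v. peval v a \<Longrightarrow> peval v b \<Longrightarrow> peval v c) \<Longrightarrow> D c"
  by (rule D_mp[of b c], rule D_mp1[of a]) auto

lemma D_R: "D a \<Longrightarrow> \<exists>cs. GLP (Imp (R cs) a)"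
proof (induction rule: D.induct)
  case (D_glp a)
  have "GLP (Imp (R []) a)" by (rule GLP_mp1[OF D_glp.hyps]) (auto simp: R_def)
  then show ?case by blast
next
  case (D_rfn c)
  have "GLP (Imp (R [c]) (Imp (Box 0 c) c))" by (rule GLP_t) (auto simp: R_def)
  then show ?case by blast
next
  case (D_mp a b)
  obtain c1 where 1: "GLP (Imp (R c1) (Imp a b))" using D_mp.IH(1) by blast
  obtain c2 where 2: "GLP (Imp (R c2) a)" using D_mp.IH(2) by blast
  have "GLP (Imp (R (c1 @ c2)) b)" by (rule GLP_mp2[OF 1 2]) (auto simp: peval_R)
  then show ?case by blast
qed

definition cons :: "fm set \<Rightarrow> bool" where
  "cons S = (\<forall>L. set L \<subseteq> S \<longrightarrow> \<not> D (Imp (conj L) Bot))"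

lemma exists_mcs:
  assumes "\<not> D p"
  shows "\<exists>M. Neg p \<in> M \<and> cons M \<and> (\<forall>X. cons X \<longrightarrow> M \<subseteq> X \<longrightarrow> X = M)"
proof -
  define A where "A = {S. Neg p \<in> S \<and> cons S}"
  have "{Neg p} \<in> A"
    unfolding A_def cons_def
  proof (clarsimp)
    fix L assume L: "set L \<subseteq> {Neg p}" and d: "D (Imp (conj L) Bot)"
    have "D p" by (rule D_mp1[OF d]) (use L in auto)
    then show False using assms by simp
  qed
  then have ne: "A \<noteq> {}" by blast
  have ch: "\<Union>C \<in> A" if cne: "C \<noteq> {}" and cch: "subset.chain A C" for C
  proof -
    have CA: "C \<subseteq> A" using cch by (simp add: subset.chain_def)
    obtain B0 where "B0 \<in> C" using cne by blast
    then have "Neg p \<in> \<Union>C" using CA by (auto simp: A_def)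
    moreover have "cons (\<Union>C)" unfolding cons_def
    proof (intro allI impI)
      fix L assume "set L \<subseteq> \<Union>C"
      then obtain B where "B \<in> C" "set L \<subseteq> B"
        using finite_subset_Union_chain[of "set L" C A] cne cch by blast
      then show "\<not> D (Imp (conj L) Bot)" using CA by (auto simp: A_def cons_def)
    qed
    ultimately show ?thesis by (simp add: A_def)
  qed
  obtain M where "M \<in> A" "\<forall>X\<in>A. M \<subseteq> X \<longrightarrow> X = M"
    using subset_Zorn_nonempty[OF ne ch] by blast
  then show ?thesis by (auto simp: A_def)
qed


locale mcs =
  fixes M :: "fm set"
  assumes consM: "cons M" and maxM: "\<And>X. cons X \<Longrightarrow> M \<subseteq> X \<Longrightarrow> X = M"
begin

lemma notin: assumes "x \<notin> M" shows "\<exists>L. set L \<subseteq> M \<and> D (Imp (conj L) (Neg x))"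
proof -
  have "\<not> cons (insert x M)" using maxM[of "insert x M"] assms by blast
  then obtain L where L: "set L \<subseteq> insert x M" and d: "D (Imp (conj L) Bot)"
    by (auto simp: cons_def)
  define L' where "L' = filter (\<lambda>y. y \<noteq> x) L"
  have "set L' \<subseteq> M" using L by (auto simp: L'_def)
  moreover have "D (Imp (conj L') (Neg x))"
    by (rule D_mp1[OF d]) (auto simp: L'_def)
  ultimately show ?thesis by blast
qed

lemma closed: assumes "set L \<subseteq> M" "D (Imp (conj L) b)" shows "b \<in> M"
proof (rule ccontr)
  assume "b \<notin> M"
  then obtain L2 where L2: "set L2 \<subseteq> M" "D (Imp (conj L2) (Neg b))" using notin by blast
  have "D (Imp (conj (L @ L2)) Bot)" by (rule D_mp2[OF assms(2) L2(2)]) auto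
  then show False using consM assms(1) L2(1) by (auto simp: cons_def)
qed

lemma D_in: "D a \<Longrightarrow> a \<in> M"
  by (rule closed[of "[]"]) (auto elim: D_mp1)

lemma GLP_in: "GLP a \<Longrightarrow> a \<in> M"
  by (rule D_in, rule D_glp)

lemma mp_in: "Imp a b \<in> M \<Longrightarrow> a \<in> M \<Longrightarrow> b \<in> M"
  by (rule closed[of "[Imp a b, a]"]) (auto intro!: D_glp GLP_t)

lemma conj_in: "a \<in> M \<Longrightarrow> b \<in> M \<Longrightarrow> Conj a b \<in> M"
  by (rule closed[of "[a, b]"]) (auto intro!: D_glp GLP_t)

lemma neg_in: "x \<notin> M \<Longrightarrow> Neg x \<in> M"
  using notin closed by blast

lemma not_both: "x \<in> M \<Longrightarrow> Neg x \<in> M \<Longrightarrow> False"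
proof -
  assume "x \<in> M" "Neg x \<in> M"
  moreover have "D (Imp (conj [x, Neg x]) Bot)" by (rule D_glp, rule GLP_t) simp
  ultimately show False using consM unfolding cons_def by (metis empty_subsetI insert_subset list.set(1) list.set(2))
qed

definition comp :: "fm set" where
  "comp = {Conj (Box 0 b) b | b. Box 0 b \<in> M} \<union> {Dia 0 a | a. Dia 0 a \<in> M}"

definition W :: "fm set" where
  "W = {p. \<exists>L. set L \<subseteq> comp \<and> GLP (Imp (conj L) p)}"

definition val :: "fm \<Rightarrow> bool" where
  "val x = (case x of Box k a \<Rightarrow> (if k = 0 then Box 0 a \<in> M else if k = 1 then a \<in> W else True) | _ \<Rightarrow> False)"

lemma val0[simp]: "val (Box 0 a) = (Box 0 a \<in> M)" by (simp add: val_def)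
lemma val1[simp]: "val (Box (Suc 0) a) = (a \<in> W)" by (simp add: val_def)
lemma val2[simp]: "val (Box (Suc (Suc k)) a) = True" by (simp add: val_def)

lemma comp_persist: assumes "x \<in> comp" shows "GLP (Imp x (Box 1 x))"
proof -
  { fix b assume x: "x = Conj (Box 0 b) b"
    have 1: "GLP (Imp (Box 0 x) (Box 1 x))" by (rule ax_mono) simp
    have "GLP (Imp x (Box 1 x))" by (rule GLP_mp2[OF four[of 0 b] 1]) (auto simp: x) }
  moreover
  { fix a assume x: "x = Dia 0 a"
    have "GLP (Imp x (Box 1 x))" unfolding x by (rule ax_neg) simp }
  ultimately show ?thesis using assms by (auto simp: comp_def)
qed

lemma conj_persist: "set L \<subseteq> comp \<Longrightarrow> GLP (Imp (conj L) (Box 1 (conj L)))"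
proof (induction L)
  case Nil
  have "GLP (Box 1 (conj []))" by (rule nec, rule GLP_t) simp
  then show ?case by (rule GLP_mp1) simp
next
  case (Cons x L)
  have 1: "GLP (Imp x (Box 1 x))" using Cons.prems comp_persist by simp
  have 2: "GLP (Imp (conj L) (Box 1 (conj L)))" using Cons by simp
  show ?case by (rule GLP_mp3[OF 1 2 box_conj[of 1 x "conj L"]]) auto
qed

lemma W_mp: "Imp a b \<in> W \<Longrightarrow> a \<in> W \<Longrightarrow> b \<in> W"
proof -
  assume "Imp a b \<in> W" "a \<in> W"
  then obtain L1 L2 where "set L1 \<subseteq> comp" "GLP (Imp (conj L1) (Imp a b))"
    "set L2 \<subseteq> comp" "GLP (Imp (conj L2) a)" by (auto simp: W_def)
  moreover have "GLP (Imp (conj (L1 @ L2)) b)" by (rule GLP_mp2[OF calculation(2,4)]) auto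
  ultimately show "b \<in> W" unfolding W_def by (intro CollectI exI[of _ "L1 @ L2"]) auto
qed

lemma W_lob: "Imp (Box 1 a) a \<in> W \<Longrightarrow> a \<in> W"
proof -
  assume "Imp (Box 1 a) a \<in> W"
  then obtain L where L: "set L \<subseteq> comp" "GLP (Imp (conj L) (Imp (Box 1 a) a))" by (auto simp: W_def)
  have 1: "GLP (Imp (Box 1 (conj L)) (Box 1 (Imp (Box 1 a) a)))" by (rule box_mono[OF L(2)])
  have 2: "GLP (Imp (conj L) (Box 1 a))"
    by (rule GLP_mp3[OF conj_persist[OF L(1)] 1 ax_L[of 1 a]]) auto
  have "GLP (Imp (conj L) a)" by (rule GLP_mp2[OF 2 L(2)]) auto
  then show "a \<in> W" using L(1) by (auto simp: W_def)
qed

lemma sound: "GLP x \<Longrightarrow> peval val x"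
proof (induction rule: GLP.induct)
  case (ax_taut a) then show ?case by (simp add: taut_def)
next
  case (ax_K k a b)
  show ?case
  proof (cases k)
    case 0 then show ?thesis using mp_in[OF mp_in[OF GLP_in[OF GLP.ax_K[of 0 a b]]]] by auto
  next
    case (Suc k') then show ?thesis by (cases k') (auto intro: W_mp)
  qed
next
  case (ax_L k a)
  show ?case
  proof (cases k)
    case 0 then show ?thesis using mp_in[OF GLP_in[OF GLP.ax_L[of 0 a]]] by auto
  next
    case (Suc k') then show ?thesis by (cases k') (auto intro: W_lob)
  qed
next
  case (ax_neg j k a)
  show ?case
  proof (cases k)
    case 0 then show ?thesis using ax_neg by simp
  next
    case (Suc k')
    show ?thesis
    proof (cases k')
      case 0
      then have j: "j = 0" using ax_neg Suc by simp
      { assume "Box 0 (Neg a) \<notin> M"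
        then have "Dia 0 a \<in> M" using neg_in by (simp add: Dia_def)
        then have "Dia 0 a \<in> comp" by (auto simp: comp_def)
        moreover have "GLP (Imp (conj [Dia 0 a]) (Dia 0 a))" by (rule GLP_t) simp
        ultimately have "Dia 0 a \<in> W" unfolding W_def by (intro CollectI exI[of _ "[Dia 0 a]"]) auto }
      then show ?thesis using Suc 0 j by (auto simp: Dia_def)
    next
      case (Suc k'') then show ?thesis using \<open>k = Suc k'\<close> by simp
    qed
  qed
next
  case (ax_mono j k a)
  show ?case
  proof (cases "j = k")
    case True then show ?thesis by simp
  next
    case False
    show ?thesis
    proof (cases k)
      case 0 then show ?thesis using ax_mono False by simp
    next
      case (Suc k')
      show ?thesis
      proof (cases k')
        case 0
        then have j: "j = 0" using ax_mono Suc False by simp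
        { assume "Box 0 a \<in> M"
          then have "Conj (Box 0 a) a \<in> comp" by (auto simp: comp_def)
          moreover have "GLP (Imp (conj [Conj (Box 0 a) a]) a)" by (rule GLP_t) simp
          ultimately have "a \<in> W" unfolding W_def by (intro CollectI exI[of _ "[Conj (Box 0 a) a]"]) auto }
        then show ?thesis using Suc 0 j by auto
      next
        case (Suc k'') then show ?thesis using \<open>k = Suc k'\<close> by simp
      qed
    qed
  qed
next
  case (mp a b) then show ?case by simp
next
  case (nec a k)
  show ?case
  proof (cases k)
    case 0 then show ?thesis using GLP_in[OF GLP.nec[OF nec.hyps]] by simp
  next
    case (Suc k')
    have "GLP (Imp (conj []) a)" by (rule GLP_mp1[OF nec.hyps]) simp
    then have "a \<in> W" unfolding W_def by (intro CollectI exI[of _ "[]"]) auto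
    then show ?thesis using Suc by (cases k') auto
  qed
qed

lemma comp_M: "comp \<subseteq> M"
proof
  fix x assume "x \<in> comp"
  then show "x \<in> M"
  proof (auto simp: comp_def)
    fix b assume b: "Box 0 b \<in> M"
    have "b \<in> M" by (rule mp_in[OF D_in[OF D_rfn] b])
    then show "Conj (Box 0 b) b \<in> M" using conj_in b by blast
  qed
qed

lemma box1_in: assumes "GLP (Box 1 p)" shows "p \<in> M"
proof -
  have "p \<in> W" using sound[OF assms] by simp
  then obtain L where "set L \<subseteq> comp" "GLP (Imp (conj L) p)" by (auto simp: W_def)
  then show ?thesis using closed[of L p] comp_M D_glp by blast
qed

end

lemma box1_D: assumes "GLP (Box 1 p)" shows "D p"
proof (rule ccontr)
  assume "\<not> D p"
  then obtain M where M: "Neg p \<in> M" "cons M" "\<forall>X. cons X \<longrightarrow> M \<subseteq> X \<longrightarrow> X = M"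
    using exists_mcs by blast
  then interpret mcs M by unfold_locales auto
  show False using not_both[OF box1_in[OF assms] M(1)] .
qed

theorem mainTheorem16:
  shows "GLP (Box 1 \<phi>) \<longleftrightarrow> (\<exists>k\<ge>1. GLP (Iff \<phi> (Imp (Q k \<phi>) \<phi>)))"
proof
  assume "GLP (Box 1 \<phi>)"
  then obtain cs where "GLP (Imp (R cs) \<phi>)" using box1_D D_R by blast
  then obtain n where n: "GLP (Qp n \<phi>)" using RQ by blast
  have "GLP (Iff \<phi> (Imp (Q (Suc n) \<phi>) \<phi>))"
    by (rule GLP_mp1[OF n]) (auto simp: Iff_def Q_Qp)
  then show "\<exists>k\<ge>1. GLP (Iff \<phi> (Imp (Q k \<phi>) \<phi>))" by (intro exI[of _ "Suc n"]) simp
next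
  assume "\<exists>k\<ge>1. GLP (Iff \<phi> (Imp (Q k \<phi>) \<phi>))"
  then obtain k where k: "k \<ge> 1" "GLP (Iff \<phi> (Imp (Q k \<phi>) \<phi>))" by blast
  then obtain n where "k = Suc n" by (cases k) auto
  then have h: "GLP (Iff \<phi> (Imp (Qp n \<phi>) \<phi>))" using k Q_Qp by simp
  have "GLP (Qp n \<phi>)" by (rule GLP_mp1[OF h]) (auto simp: Iff_def dest: peval_Qp)
  then show "GLP (Box 1 \<phi>)" by (rule GLP.mp[OF box1_Qp nec])
qed

end
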